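(* Let $m,n\ge 1$ and let $H^X,H^Z\in\mathbb F_2^{m\times n}$ satisfy $H^X(H^Z)^{\mathsf T}=0$ over $\mathbb F_2$. For $i\in\{1,\dots,m\}$ and $j\in\{1,\dots,n\}$ put $\partial_i^X=\{j: H^X_{ij}=1\}$, $\partial_i^Z=\{j: H^Z_{ij}=1\}$, $\partial_j^X=\{i: H^X_{ij}=1\}$, $\partial_j^Z=\{i: H^Z_{ij}=1\}$. Fix syndromes $\boldsymbol s^X,\boldsymbol s^Z\in\mathbb F_2^m$ and, for each $j$, a local prior $Q_j:\mathbb F_2^2\to[0,\infty)$ (a probability distribution on $(x_j,z_j)$). Let $\mathbb F_4=\{0,1,\omega,\omega^2\}$ with $\omega^2=\omega+1$, let $\phi:\mathbb F_2^2\to\mathbb F_4$, $\phi(x,z)=x+\omega z$ (a bijection), write $\phi^{-1}(\alpha)=(x(\alpha),z(\alpha))$, and set $Q_j^\phi(\alpha)=Q_j(x(\alpha),z(\alpha))$. Define the joint binary posterior on $(\boldsymbol x,\boldsymbol z)\in\mathbb F_2^n\times\mathbb F_2^n$ $$P_2(\boldsymbol x,\boldsymbol z\mid \boldsymbol s^X,\boldsymbol s^Z)=\frac1{Z_2}\prod_{j=1}^n Q_j(x_j,z_j)\prod_{i=1}^m\mathbf 1\Big\{\textstyle\sum_{j'\in\partial_i^X} z_{j'}=s_i^Z\Big\}\prod_{i=1}^m\mathbf 1\Big\{\textstyle\sum_{j'\in\partial_i^Z} x_{j'}=s_i^X\Big\},$$ and the four-state posterior on $\boldsymbol\alpha\in\mathbb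 F_4^n$ $$P_4(\boldsymbol\alpha\mid \boldsymbol s^X,\boldsymbol s^Z)=\frac1{Z_4}\prod_{j=1}^n Q_j^\phi(\alpha_j)\prod_{i=1}^m\mathbf 1\Big\{\textstyle\sum_{j\in\partial_i^X} z(\alpha_j)=s_i^Z\Big\}\prod_{i=1}^m\mathbf 1\Big\{\textstyle\sum_{j\in\partial_i^Z} x(\alpha_j)=s_i^X\Big\},$$ where all sums in indicators are in $\mathbb F_2$ and $Z_2,Z_4$ are normalizing constants (assumed positive). Joint BP (sum-product on the first factorization): for iterations $\ell=0,1,2,\dots$, given check-to-variable messages $\widehat\nu^{(\ell)}_{i\to j}(z)$ ($i\in\partial^X_j$) and $\widehat\mu^{(\ell)}_{i\to j}(x)$ ($i\in\partial_j^Z$), define $$\nu^{(\ell)}_{j\to i}(z)\propto\sum_{x\in\mathbb F_2}Q_j(x,z)\prod_{k\in\partial_j^X\setminus\{i\}}\widehat\nu^{(\ell)}_{k\to j}(z)\prod_{k\in\partial_j^Z}\widehat\mu^{(\ell)}_{k\to j}(x),\quad i\in\partial^X_j,$$ $$\mu^{(\ell)}_{j\to i}(x)\propto\sum_{z\in\mathbb F_2}Q_j(x,z)\prod_{k\in\partial_j^X}\widehat\nu^{(\ell)}_{k\to j}(z)\prod_{k\in\partial_j^Z\setminus\{i\}}\widehat\mu^{(\ell)}_{k\to j}(x),\quad i\in\partial^Z_j,$$ $$\widehat\nu^{(\ell+1)}_{i\to j}(z)\propto\sum_{\substack{(z_b)_{b\in\partial_i^X\setminus\{j\}}\\ z+\sum_b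 z_b=s_i^Z}}\ \prod_{b\in\partial_i^X\setminus\{j\}}\nu^{(\ell)}_{b\to i}(z_b),\qquad \widehat\mu^{(\ell+1)}_{i\to j}(x)\propto\sum_{\substack{(x_b)_{b\in\partial_i^Z\setminus\{j\}}\\ x+\sum_b x_b=s_i^X}}\ \prod_{b\in\partial_i^Z\setminus\{j\}}\mu^{(\ell)}_{b\to i}(x_b),$$ and beliefs $b^{(\ell)}_{2,j}(x,z)\propto Q_j(x,z)\prod_{i\in\partial_j^X}\widehat\nu^{(\ell)}_{i\to j}(z)\prod_{i\in\partial_j^Z}\widehat\mu^{(\ell)}_{i\to j}(x)$. Four-state BP (sum-product on the second factorization): given $\widehat m^{X,(\ell)}_{i\to j}(\alpha)$ ($i\in\partial_j^X$) and $\widehat m^{Z,(\ell)}_{i\to j}(\alpha)$ ($i\in\partial^Z_j$), define $$m^{X,(\ell)}_{j\to i}(\alpha)\propto Q^\phi_j(\alpha)\prod_{k\in\partial_j^X\setminus\{i\}}\widehat m^{X,(\ell)}_{k\to j}(\alpha)\prod_{k\in\partial_j^Z}\widehat m^{Z,(\ell)}_{k\to j}(\alpha),\qquad m^{Z,(\ell)}_{j\to i}(\alpha)\propto Q^\phi_j(\alpha)\prod_{k\in\partial_j^X}\widehat m^{X,(\ell)}_{k\to j}(\alpha)\prod_{k\in\partial_j^Z\setminus\{i\}}\widehat m^{Z,(\ell)}_{k\to j}(\alpha),$$ $$\widehat m^{X,(\ell+1)}_{i\to j}(\alpha)\propto\sum_{\substack{(\alpha_b)_{b\in\partial_i^X\setminus\{j\}}\\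 z(\alpha)+\sum_b z(\alpha_b)=s_i^Z}}\ \prod_{b}m^{X,(\ell)}_{b\to i}(\alpha_b),\qquad \widehat m^{Z,(\ell+1)}_{i\to j}(\alpha)\propto\sum_{\substack{(\alpha_b)_{b\in\partial_i^Z\setminus\{j\}}\\ x(\alpha)+\sum_b x(\alpha_b)=s_i^X}}\ \prod_{b}m^{Z,(\ell)}_{b\to i}(\alpha_b),$$ and beliefs $b^{(\ell)}_{4,j}(\alpha)\propto Q_j^\phi(\alpha)\prod_{i\in\partial_j^X}\widehat m^{X,(\ell)}_{i\to j}(\alpha)\prod_{i\in\partial_j^Z}\widehat m^{Z,(\ell)}_{i\to j}(\alpha)$. Assume the two decoders are initialized compatibly, i.e. for all $j$, $x,z\in\mathbb F_2$: $\widehat m^{X,(0)}_{i\to j}(\phi(x,z))\propto\widehat\nu^{(0)}_{i\to j}(z)$ for $i\in\partial_j^X$ and $\widehat m^{Z,(0)}_{i\to j}(\phi(x,z))\propto\widehat\mu^{(0)}_{i\to j}(x)$ for $i\in\partial_j^Z$ (e.g. all initial check-to-variable messages uniform). Then: (1) For all $\boldsymbol x,\boldsymbol z\in\mathbb F_2^n$, $P_4(\phi(\boldsymbol x,\boldsymbol z)\mid\boldsymbol s^X,\boldsymbol s^Z)=P_2(\boldsymbol x,\boldsymbol z\mid\boldsymbol s^X,\boldsymbol s^Z)$, where $\phi(\boldsymbol x,\boldsymbol z)_j=\phi(x_j,z_j)$. (2) For every iteration $\ell$, every $j$ and all $x,z\in\mathbb F_2$: $\widehat m^{X,(\ell)}_{i\to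 j}(\phi(x,z))\propto\widehat\nu^{(\ell)}_{i\to j}(z)$ for $i\in\partial_j^X$, and $\widehat m^{Z,(\ell)}_{i\to j}(\phi(x,z))\propto\widehat\mu^{(\ell)}_{i\to j}(x)$ for $i\in\partial_j^Z$. (3) For every $\ell$: $\nu^{(\ell)}_{j\to i}(z)\propto\sum_{x\in\mathbb F_2}m^{X,(\ell)}_{j\to i}(\phi(x,z))$ for $i\in\partial_j^X$, and $\mu^{(\ell)}_{j\to i}(x)\propto\sum_{z\in\mathbb F_2}m^{Z,(\ell)}_{j\to i}(\phi(x,z))$ for $i\in\partial_j^Z$. (4) For every $\ell$, $j\in\{1,\dots,n\}$ and $(\xi,\zeta)\in\mathbb F_2^2$, the normalized beliefs satisfy $b^{(\ell)}_{4,j}(\phi(\xi,\zeta))=b^{(\ell)}_{2,j}(\xi,\zeta)$. (5) Consequently, fixing any tie-breaking order on $\mathbb F_2^2$ and the induced order on $\mathbb F_4$ via $\phi$, the hard decisions $\widehat\alpha^{(\ell)}_j=\arg\max_{\alpha\in\mathbb F_4}b^{(\ell)}_{4,j}(\alpha)$ and $(\widetilde x^{(\ell)}_j,\widetilde z^{(\ell)}_j)=\arg\max_{(x,z)\in\mathbb F_2^2}b^{(\ell)}_{2,j}(x,z)$ satisfy $\widehat\alpha^{(\ell)}_j=\phi(\widetilde x^{(\ell)}_j,\widetilde z^{(\ell)}_j)$.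
   Context: Messages are nonnegative functions on the alphabet of a single variable ($\mathbb F_2$ or $\mathbb F_4$), identified up to multiplication by a positive constant; the symbol $\propto$ means equality up to such a positive (edge-local) constant. Beliefs are normalized to probability distributions (they are assumed not identically zero). The hard-decision argmax ties are broken by the fixed common order. This describes CSS syndrome decoding: $x_j,z_j$ are the $X$- and $Z$-components of the Pauli error on qubit $j$, rows of $H^X$ constrain $\boldsymbol z$ via $H^X\boldsymbol z=\boldsymbol s^Z$ and rows of $H^Z$ constrain $\boldsymbol x$ via $H^Z\boldsymbol x=\boldsymbol s^X$. *)

theory Defs
  imports Complex_Main "HOL-Library.Z2" "HOL-Library.FuncSet"
begin

lemma UNIV_bit: "(UNIV :: bit set) = {0, 1}"
  by (auto intro: bit.exhaust)

instance bit :: finite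
  by standard (simp add: UNIV_bit)

datatype f4 = F0 | F1 | Fw | Fw2

lemma UNIV_f4: "(UNIV :: f4 set) = {F0, F1, Fw, Fw2}"
  by (auto intro: f4.exhaust)

instance f4 :: finite
  by standard (simp add: UNIV_f4)

fun f4_add :: "f4 \<Rightarrow> f4 \<Rightarrow> f4" where
  "f4_add F0 b = b"
| "f4_add a F0 = a"
| "f4_add F1 F1 = F0"
| "f4_add F1 Fw = Fw2"
| "f4_add F1 Fw2 = Fw"
| "f4_add Fw F1 = Fw2"
| "f4_add Fw Fw = F0"
| "f4_add Fw Fw2 = F1"
| "f4_add Fw2 F1 = Fw"
| "f4_add Fw2 Fw = F1"
| "f4_add Fw2 Fw2 = F0"

fun f4_mul :: "f4 \<Rightarrow> f4 \<Rightarrow> f4" where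
  "f4_mul F0 b = F0"
| "f4_mul a F0 = F0"
| "f4_mul F1 b = b"
| "f4_mul a F1 = a"
| "f4_mul Fw Fw = Fw2"
| "f4_mul Fw Fw2 = F1"
| "f4_mul Fw2 Fw = F1"
| "f4_mul Fw2 Fw2 = Fw"

definition f4_of_bit :: "bit \<Rightarrow> f4" where
  "f4_of_bit b = (if b = 1 then F1 else F0)"

definition phi :: "bit \<Rightarrow> bit \<Rightarrow> f4" where
  "phi x z = f4_add (f4_of_bit x) (f4_mul Fw (f4_of_bit z))"

definition phi_inv :: "f4 \<Rightarrow> bit \<times> bit" where
  "phi_inv = inv (\<lambda>(x, z). phi x z)"

definition xof :: "f4 \<Rightarrow> bit" where "xof a = fst (phi_inv a)"
definition zof :: "f4 \<Rightarrow> bit" where "zof a = snd (phi_inv a)"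

section \<open>Tanner graph neighbourhoods; vectors are nat-indexed, 0-based\<close>

definition row_supp :: "nat \<Rightarrow> (nat \<Rightarrow> nat \<Rightarrow> bit) \<Rightarrow> nat \<Rightarrow> nat set" where
  "row_supp n H i = {j. j < n \<and> H i j = 1}"

definition col_supp :: "nat \<Rightarrow> (nat \<Rightarrow> nat \<Rightarrow> bit) \<Rightarrow> nat \<Rightarrow> nat set" where
  "col_supp m H j = {i. i < m \<and> H i j = 1}"

text \<open>F2^n and F4^n as zero-extended functions on nat.\<close>
definition vecs2 :: "nat \<Rightarrow> (nat \<Rightarrow> bit) set" where
  "vecs2 n = {x. \<forall>j\<ge>n. x j = 0}"

definition vecs4 :: "nat \<Rightarrow> (nat \<Rightarrow> f4) set" where
  "vecs4 n = {a. \<forall>j\<ge>n. a j = F0}"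

definition phi_vec :: "nat \<Rightarrow> (nat \<Rightarrow> bit) \<Rightarrow> (nat \<Rightarrow> bit) \<Rightarrow> nat \<Rightarrow> f4" where
  "phi_vec n x z = (\<lambda>j. if j < n then phi (x j) (z j) else F0)"

definition weight2 :: "nat \<Rightarrow> nat \<Rightarrow> (nat \<Rightarrow> nat \<Rightarrow> bit) \<Rightarrow> (nat \<Rightarrow> nat \<Rightarrow> bit)
    \<Rightarrow> (nat \<Rightarrow> bit) \<Rightarrow> (nat \<Rightarrow> bit) \<Rightarrow> (nat \<Rightarrow> bit \<Rightarrow> bit \<Rightarrow> real)
    \<Rightarrow> (nat \<Rightarrow> bit) \<Rightarrow> (nat \<Rightarrow> bit) \<Rightarrow> real" where
  "weight2 m n HX HZ sX sZ Q x z =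
     (\<Prod>j<n. Q j (x j) (z j))
     * (\<Prod>i<m. of_bool ((\<Sum>j'\<in>row_supp n HX i. z j') = sZ i))
     * (\<Prod>i<m. of_bool ((\<Sum>j'\<in>row_supp n HZ i. x j') = sX i))"

definition Z2_const where
  "Z2_const m n HX HZ sX sZ Q =
     (\<Sum>x\<in>vecs2 n. \<Sum>z\<in>vecs2 n. weight2 m n HX HZ sX sZ Q x z)"

definition P2 where
  "P2 m n HX HZ sX sZ Q x z =
     weight2 m n HX HZ sX sZ Q x z / Z2_const m n HX HZ sX sZ Q"

definition Qphi :: "(nat \<Rightarrow> bit \<Rightarrow> bit \<Rightarrow> real) \<Rightarrow> nat \<Rightarrow> f4 \<Rightarrow> real" where
  "Qphi Q j a = Q j (xof a) (zof a)"

definition weight4 :: "nat \<Rightarrow> nat \<Rightarrow> (nat \<Rightarrow> nat \<Rightarrow> bit) \<Rightarrow> (nat \<Rightarrow> nat \<Rightarrow> bit)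
    \<Rightarrow> (nat \<Rightarrow> bit) \<Rightarrow> (nat \<Rightarrow> bit) \<Rightarrow> (nat \<Rightarrow> bit \<Rightarrow> bit \<Rightarrow> real)
    \<Rightarrow> (nat \<Rightarrow> f4) \<Rightarrow> real" where
  "weight4 m n HX HZ sX sZ Q a =
     (\<Prod>j<n. Qphi Q j (a j))
     * (\<Prod>i<m. of_bool ((\<Sum>j\<in>row_supp n HX i. zof (a j)) = sZ i))
     * (\<Prod>i<m. of_bool ((\<Sum>j\<in>row_supp n HZ i. xof (a j)) = sX i))"

definition Z4_const where
  "Z4_const m n HX HZ sX sZ Q = (\<Sum>a\<in>vecs4 n. weight4 m n HX HZ sX sZ Q a)"

definition P4 where
  "P4 m n HX HZ sX sZ Q a = weight4 m n HX HZ sX sZ Q a / Z4_const m n HX HZ sX sZ Q"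

definition propto :: "('a \<Rightarrow> real) \<Rightarrow> ('a \<Rightarrow> real) \<Rightarrow> bool" (infix "\<propto>" 50) where
  "f \<propto> g \<longleftrightarrow> (\<exists>c>0. \<forall>a. f a = c * g a)"

section \<open>Hard decision: argmax with ties broken by a fixed order (a list enumerating the alphabet)\<close>

definition argmax_ord :: "('a \<Rightarrow> real) \<Rightarrow> 'a list \<Rightarrow> 'a" where
  "argmax_ord f ord = hd (filter (\<lambda>a. f a = Max (f ` set ord)) ord)"

end

theory Submission
  imports Defs
begin

lemma phi_vals[simp]: "phi 0 0 = F0" "phi 1 0 = F1" "phi 0 1 = Fw" "phi 1 1 = Fw2"
  by (simp_all add: phi_def f4_of_bit_def)

lemma bit_cases2: "(x::bit) = 0 \<or> x = 1" by (cases x) auto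

lemma inj_phi: "inj (\<lambda>(x, z). phi x z)"
proof (rule injI, clarify)
  fix x z x' z' assume "phi x z = phi x' z'"
  then show "x = x' \<and> z = z'"
    using bit_cases2[of x] bit_cases2[of z] bit_cases2[of x'] bit_cases2[of z'] by auto
qed

lemma phi_inv_phi[simp]: "phi_inv (phi x z) = (x, z)"
  unfolding phi_inv_def using inv_f_f[OF inj_phi, of "(x,z)"] by simp

lemma xof_phi[simp]: "xof (phi x z) = x" and zof_phi[simp]: "zof (phi x z) = z"
  by (simp_all add: xof_def zof_def)

lemma phi_surj: "\<exists>x z. a = phi x z"
  by (cases a) (metis phi_vals)+

lemma phi_xof_zof[simp]: "phi (xof a) (zof a) = a"
  using phi_surj[of a] by auto

lemma sum_bit: "(\<Sum>x\<in>UNIV. f x) = f (0::bit) + f 1"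
  by (simp add: UNIV_bit)

lemma sum_f4: "(\<Sum>a\<in>UNIV. g a) = (\<Sum>x\<in>UNIV. \<Sum>z\<in>UNIV. g (phi x z))"
  by (simp add: UNIV_f4 sum_bit algebra_simps)

lemma sum_PiE_gen:
  fixes pr1 pr2 :: "f4 \<Rightarrow> bit" and mk :: "bit \<Rightarrow> bit \<Rightarrow> f4"
  assumes fin: "finite S"
    and mk1: "\<And>a. mk (pr1 a) (pr2 a) = a"
    and pr1: "\<And>u v. pr1 (mk u v) = u" and pr2: "\<And>u v. pr2 (mk u v) = v"
  shows "(\<Sum>ab\<in>PiE S (\<lambda>_. UNIV::f4 set). if P (\<Sum>b\<in>S. pr1 (ab b)) then (\<Prod>b\<in>S. f b (ab b)) else 0)
   = (\<Sum>zb\<in>PiE S (\<lambda>_. UNIV::bit set). if P (\<Sum>b\<in>S. zb b)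
        then (\<Prod>b\<in>S. \<Sum>y\<in>UNIV. f b (mk (zb b) y)) else (0::real))"
proof -
  let ?B = "PiE S (\<lambda>_. UNIV::bit set)"
  have "(\<Sum>zb\<in>?B. if P (\<Sum>b\<in>S. zb b)
        then (\<Prod>b\<in>S. \<Sum>y\<in>UNIV. f b (mk (zb b) y)) else (0::real))
     = (\<Sum>zb\<in>?B. \<Sum>xb\<in>?B. if P (\<Sum>b\<in>S. zb b)
        then (\<Prod>b\<in>S. f b (mk (zb b) (xb b))) else (0::real))"
    using fin by (intro sum.cong refl) (simp add: prod_sum_PiE)
  also have "\<dots> = (\<Sum>(zb,xb)\<in>?B \<times> ?B. if P (\<Sum>b\<in>S. zb b)
        then (\<Prod>b\<in>S. f b (mk (zb b) (xb b))) else (0::real))"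
    by (rule sum.cartesian_product)
  also have "(\<Sum>ab\<in>PiE S (\<lambda>_. UNIV::f4 set). if P (\<Sum>b\<in>S. pr1 (ab b)) then (\<Prod>b\<in>S. f b (ab b)) else 0)
      = \<dots>"
  proof (rule sum.reindex_bij_witness[where j = "\<lambda>ab. (restrict (\<lambda>b. pr1 (ab b)) S, restrict (\<lambda>b. pr2 (ab b)) S)"
        and i = "\<lambda>(zb, xb). restrict (\<lambda>b. mk (zb b) (xb b)) S"])
    fix a assume a: "a \<in> PiE S (\<lambda>_. UNIV::f4 set)"
    show "(case (restrict (\<lambda>b. pr1 (a b)) S, restrict (\<lambda>b. pr2 (a b)) S) of
            (zb, xb) \<Rightarrow> restrict (\<lambda>b. mk (zb b) (xb b)) S) = a"
      using a by (auto simp: fun_eq_iff mk1 PiE_iff extensional_def)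
    show "(restrict (\<lambda>b. pr1 (a b)) S, restrict (\<lambda>b. pr2 (a b)) S) \<in> ?B \<times> ?B" by auto
    show "(case (restrict (\<lambda>b. pr1 (a b)) S, restrict (\<lambda>b. pr2 (a b)) S) of
        (zb, xb) \<Rightarrow> if P (\<Sum>b\<in>S. zb b) then \<Prod>b\<in>S. f b (mk (zb b) (xb b)) else 0) =
       (if P (\<Sum>b\<in>S. pr1 (a b)) then \<Prod>b\<in>S. f b (a b) else 0)"
      by (simp add: mk1 cong: sum.cong prod.cong)
  next
    fix b assume b: "b \<in> ?B \<times> ?B"
    then show "(restrict (\<lambda>ba. pr1 ((case b of (zb, xb) \<Rightarrow> restrict (\<lambda>b. mk (zb b) (xb b)) S) ba)) S,
         restrict (\<lambda>ba. pr2 ((case b of (zb, xb) \<Rightarrow> restrict (\<lambda>b. mk (zb b) (xb b)) S) ba)) S) = b"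
      by (auto simp: fun_eq_iff pr1 pr2 PiE_iff extensional_def)
    show "(case b of (zb, xb) \<Rightarrow> restrict (\<lambda>b. mk (zb b) (xb b)) S) \<in> PiE S (\<lambda>_. UNIV::f4 set)"
      by (auto split: prod.splits)
  qed
  finally show ?thesis by simp
qed

lemma sum_PiE_z:
  assumes "finite S"
  shows "(\<Sum>ab\<in>PiE S (\<lambda>_. UNIV::f4 set). if P (\<Sum>b\<in>S. zof (ab b)) then (\<Prod>b\<in>S. f b (ab b)) else 0)
   = (\<Sum>zb\<in>PiE S (\<lambda>_. UNIV::bit set). if P (\<Sum>b\<in>S. zb b)
        then (\<Prod>b\<in>S. \<Sum>x\<in>UNIV. f b (phi x (zb b))) else (0::real))"
  by (rule sum_PiE_gen[OF assms, of "\<lambda>u v. phi v u" zof xof]) simp_all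

lemma sum_PiE_x:
  assumes "finite S"
  shows "(\<Sum>ab\<in>PiE S (\<lambda>_. UNIV::f4 set). if P (\<Sum>b\<in>S. xof (ab b)) then (\<Prod>b\<in>S. f b (ab b)) else 0)
   = (\<Sum>xb\<in>PiE S (\<lambda>_. UNIV::bit set). if P (\<Sum>b\<in>S. xb b)
        then (\<Prod>b\<in>S. \<Sum>z\<in>UNIV. f b (phi (xb b) z)) else (0::real))"
  by (rule sum_PiE_gen[OF assms, of phi xof zof]) simp_all

lemma weight_eq:
  "weight4 m n HX HZ sX sZ Q (phi_vec n x z) = weight2 m n HX HZ sX sZ Q x z"
proof -
  have a: "(\<Prod>j<n. Qphi Q j (phi_vec n x z j)) = (\<Prod>j<n. Q j (x j) (z j))"
    by (intro prod.cong) (auto simp: Qphi_def phi_vec_def)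
  have b: "\<And>H s. (\<Prod>i<m. of_bool ((\<Sum>j\<in>row_supp n H i. zof (phi_vec n x z j)) = s i)) =
      (\<Prod>i<m. (of_bool ((\<Sum>j\<in>row_supp n H i. z j) = s i) :: real))"
    by (intro prod.cong refl arg_cong[where f = of_bool] arg_cong2[where f = "(=)"] sum.cong)
       (auto simp: row_supp_def phi_vec_def)
  have c: "\<And>H s. (\<Prod>i<m. of_bool ((\<Sum>j\<in>row_supp n H i. xof (phi_vec n x z j)) = s i)) =
      (\<Prod>i<m. (of_bool ((\<Sum>j\<in>row_supp n H i. x j) = s i) :: real))"
    by (intro prod.cong refl arg_cong[where f = of_bool] arg_cong2[where f = "(=)"] sum.cong)
       (auto simp: row_supp_def phi_vec_def)
  show ?thesis unfolding weight4_def weight2_def by (simp only: a b c)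
qed

lemma vecs4_image: "vecs4 n = (\<lambda>(x, z). phi_vec n x z) ` (vecs2 n \<times> vecs2 n)"
proof
  show "(\<lambda>(x, z). phi_vec n x z) ` (vecs2 n \<times> vecs2 n) \<subseteq> vecs4 n"
    by (auto simp: vecs4_def phi_vec_def)
  show "vecs4 n \<subseteq> (\<lambda>(x, z). phi_vec n x z) ` (vecs2 n \<times> vecs2 n)"
  proof
    fix a assume a: "a \<in> vecs4 n"
    let ?x = "\<lambda>j. if j < n then xof (a j) else 0"
    let ?z = "\<lambda>j. if j < n then zof (a j) else 0"
    have "a = phi_vec n ?x ?z" using a by (auto simp: fun_eq_iff phi_vec_def vecs4_def)
    moreover have "(?x, ?z) \<in> vecs2 n \<times> vecs2 n" by (auto simp: vecs2_def)
    ultimately show "a \<in> (\<lambda>(x, z). phi_vec n x z) ` (vecs2 n \<times> vecs2 n)" by force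
  qed
qed

lemma phi_vec_inj: "inj_on (\<lambda>(x, z). phi_vec n x z) (vecs2 n \<times> vecs2 n)"
proof (rule inj_onI, clarify)
  fix x z x' z' assume v: "x \<in> vecs2 n" "z \<in> vecs2 n" "x' \<in> vecs2 n" "z' \<in> vecs2 n"
    and e: "phi_vec n x z = phi_vec n x' z'"
  have "x j = x' j \<and> z j = z' j" for j
  proof (cases "j < n")
    case True
    then have "phi (x j) (z j) = phi (x' j) (z' j)" using True fun_cong[OF e, of j] unfolding phi_vec_def by (simp only: if_True)
    then have "(x j, z j) = (x' j, z' j)" using inj_phi unfolding inj_def by (metis case_prod_conv)
    then show ?thesis by simp
  next
    case False then show ?thesis using v by (auto simp: vecs2_def)
  qed
  then show "x = x' \<and> z = z'" by (auto simp: fun_eq_iff)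
qed

lemma Z_eq: "Z4_const m n HX HZ sX sZ Q = Z2_const m n HX HZ sX sZ Q"
proof -
  have "Z4_const m n HX HZ sX sZ Q =
     (\<Sum>p\<in>vecs2 n \<times> vecs2 n. weight4 m n HX HZ sX sZ Q ((\<lambda>(x, z). phi_vec n x z) p))"
    unfolding Z4_const_def vecs4_image by (rule sum.reindex[OF phi_vec_inj, unfolded o_def])
  also have "\<dots> = (\<Sum>(x,z)\<in>vecs2 n \<times> vecs2 n. weight2 m n HX HZ sX sZ Q x z)"
    by (intro sum.cong) (auto simp: weight_eq)
  also have "\<dots> = Z2_const m n HX HZ sX sZ Q"
    unfolding Z2_const_def by (rule sum.cartesian_product[symmetric])
  finally show ?thesis .
qed

lemma argmax_map:
  assumes "\<forall>p. f (h p) = (g p :: real)" "set ord \<noteq> {}"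
  shows "argmax_ord f (map h ord) = h (argmax_ord g ord)"
proof -
  have im: "f ` set (map h ord) = g ` set ord" using assms(1) by (auto simp: image_image)
  let ?M = "Max (g ` set ord)"
  have "?M \<in> g ` set ord" using assms(2) by (intro Max_in) auto
  then have ne: "filter (\<lambda>p. g p = ?M) ord \<noteq> []" by (auto simp: filter_empty_conv)
  have "filter (\<lambda>a. f a = ?M) (map h ord) = map h (filter (\<lambda>p. g p = ?M) ord)"
    using assms(1) by (simp add: filter_map o_def)
  then show ?thesis unfolding argmax_ord_def im using ne by (simp add: hd_map)
qed


lemma prod_factor:
  assumes "\<forall>k\<in>A. f k = (c k :: real) * g k"
  shows "prod f A = prod c A * prod g A"
proof -
  have "prod f A = prod (\<lambda>k. c k * g k) A" using assms by (intro prod.cong) auto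
  then show ?thesis by (simp add: prod.distrib)
qed

lemma fin_col: "finite (col_supp m H j)"
  by (rule finite_subset[of _ "{..<m}"]) (auto simp: col_supp_def)

lemma fin_row: "finite (row_supp n H i)"
  by (rule finite_subset[of _ "{..<n}"]) (auto simp: row_supp_def)

lemma propto_pair:
  assumes "(\<lambda>(x, z). f x z) \<propto> (\<lambda>(x, z). g x z)"
  shows "\<exists>c>0. \<forall>x z. f x z = c * g x z"
  using assms unfolding propto_def by (metis case_prod_conv)

lemma propto_pairI:
  assumes "c > 0" "\<And>x z. f x z = c * g x z"
  shows "(\<lambda>(x, z). f x z) \<propto> (\<lambda>(x, z). g x z)"
  using assms unfolding propto_def by auto

theorem theorem1:
  fixes m n :: nat
    and HX HZ :: "nat \<Rightarrow> nat \<Rightarrow> bit"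
    and sX sZ :: "nat \<Rightarrow> bit"
    and Q :: "nat \<Rightarrow> bit \<Rightarrow> bit \<Rightarrow> real"
    \<comment> \<open>joint binary BP: check-to-variable (l, i, j, value) and variable-to-check (l, j, i, value)\<close>
    and nuh muh :: "nat \<Rightarrow> nat \<Rightarrow> nat \<Rightarrow> bit \<Rightarrow> real"
    and nu mu :: "nat \<Rightarrow> nat \<Rightarrow> nat \<Rightarrow> bit \<Rightarrow> real"
    and b2 :: "nat \<Rightarrow> nat \<Rightarrow> bit \<Rightarrow> bit \<Rightarrow> real"
    \<comment> \<open>four-state BP\<close>
    and mXh mZh :: "nat \<Rightarrow> nat \<Rightarrow> nat \<Rightarrow> f4 \<Rightarrow> real"
    and mX mZ :: "nat \<Rightarrow> nat \<Rightarrow> nat \<Rightarrow> f4 \<Rightarrow> real"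
    and b4 :: "nat \<Rightarrow> nat \<Rightarrow> f4 \<Rightarrow> real"
  assumes m_pos: "m \<ge> 1" and n_pos: "n \<ge> 1"
    and HX_HZ_orth: "\<forall>i<m. \<forall>i'<m. (\<Sum>j<n. HX i j * HZ i' j) = 0"
    and Q_nonneg: "\<forall>j<n. \<forall>x z. Q j x z \<ge> 0"
    and Q_prob: "\<forall>j<n. (\<Sum>x\<in>UNIV. \<Sum>z\<in>UNIV. Q j x z) = 1"
    and Z2_pos: "Z2_const m n HX HZ sX sZ Q > 0"
    and Z4_pos: "Z4_const m n HX HZ sX sZ Q > 0"
    \<comment> \<open>messages are nonnegative\<close>
    and msg_nonneg2:
      "\<forall>l. \<forall>j<n. (\<forall>i\<in>col_supp m HX j. \<forall>v. nuh l i j v \<ge> 0 \<and> nu l j i v \<ge> 0)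
                \<and> (\<forall>i\<in>col_supp m HZ j. \<forall>v. muh l i j v \<ge> 0 \<and> mu l j i v \<ge> 0)"
    and msg_nonneg4:
      "\<forall>l. \<forall>j<n. (\<forall>i\<in>col_supp m HX j. \<forall>a. mXh l i j a \<ge> 0 \<and> mX l j i a \<ge> 0)
                \<and> (\<forall>i\<in>col_supp m HZ j. \<forall>a. mZh l i j a \<ge> 0 \<and> mZ l j i a \<ge> 0)"
    \<comment> \<open>joint BP, variable-to-check updates\<close>
    and nu_upd: "\<forall>l. \<forall>j<n. \<forall>i\<in>col_supp m HX j.
        nu l j i \<propto> (\<lambda>z. \<Sum>x\<in>UNIV. Q j x z
            * (\<Prod>k\<in>col_supp m HX j - {i}. nuh l k j z)
            * (\<Prod>k\<in>col_supp m HZ j. muh l k j x))"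
    and mu_upd: "\<forall>l. \<forall>j<n. \<forall>i\<in>col_supp m HZ j.
        mu l j i \<propto> (\<lambda>x. \<Sum>z\<in>UNIV. Q j x z
            * (\<Prod>k\<in>col_supp m HX j. nuh l k j z)
            * (\<Prod>k\<in>col_supp m HZ j - {i}. muh l k j x))"
    \<comment> \<open>joint BP, check-to-variable updates\<close>
    and nuh_upd: "\<forall>l. \<forall>i<m. \<forall>j\<in>row_supp n HX i.
        nuh (Suc l) i j \<propto> (\<lambda>z. \<Sum>zb\<in>PiE (row_supp n HX i - {j}) (\<lambda>_. UNIV :: bit set).
            if z + (\<Sum>b\<in>row_supp n HX i - {j}. zb b) = sZ i
            then (\<Prod>b\<in>row_supp n HX i - {j}. nu l b i (zb b)) else 0)"
    and muh_upd: "\<forall>l. \<forall>i<m. \<forall>j\<in>row_supp n HZ i.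
        muh (Suc l) i j \<propto> (\<lambda>x. \<Sum>xb\<in>PiE (row_supp n HZ i - {j}) (\<lambda>_. UNIV :: bit set).
            if x + (\<Sum>b\<in>row_supp n HZ i - {j}. xb b) = sX i
            then (\<Prod>b\<in>row_supp n HZ i - {j}. mu l b i (xb b)) else 0)"
    \<comment> \<open>joint BP, normalized beliefs\<close>
    and b2_def: "\<forall>l. \<forall>j<n.
        (\<lambda>(x, z). b2 l j x z) \<propto> (\<lambda>(x, z). Q j x z
            * (\<Prod>i\<in>col_supp m HX j. nuh l i j z)
            * (\<Prod>i\<in>col_supp m HZ j. muh l i j x))
        \<and> (\<Sum>x\<in>UNIV. \<Sum>z\<in>UNIV. b2 l j x z) = 1"
    \<comment> \<open>four-state BP, variable-to-check updates\<close>
    and mX_upd: "\<forall>l. \<forall>j<n. \<forall>i\<in>col_supp m HX j.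
        mX l j i \<propto> (\<lambda>a. Qphi Q j a
            * (\<Prod>k\<in>col_supp m HX j - {i}. mXh l k j a)
            * (\<Prod>k\<in>col_supp m HZ j. mZh l k j a))"
    and mZ_upd: "\<forall>l. \<forall>j<n. \<forall>i\<in>col_supp m HZ j.
        mZ l j i \<propto> (\<lambda>a. Qphi Q j a
            * (\<Prod>k\<in>col_supp m HX j. mXh l k j a)
            * (\<Prod>k\<in>col_supp m HZ j - {i}. mZh l k j a))"
    \<comment> \<open>four-state BP, check-to-variable updates\<close>
    and mXh_upd: "\<forall>l. \<forall>i<m. \<forall>j\<in>row_supp n HX i.
        mXh (Suc l) i j \<propto> (\<lambda>a. \<Sum>ab\<in>PiE (row_supp n HX i - {j}) (\<lambda>_. UNIV :: f4 set).
            if zof a + (\<Sum>b\<in>row_supp n HX i - {j}. zof (ab b)) = sZ i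
            then (\<Prod>b\<in>row_supp n HX i - {j}. mX l b i (ab b)) else 0)"
    and mZh_upd: "\<forall>l. \<forall>i<m. \<forall>j\<in>row_supp n HZ i.
        mZh (Suc l) i j \<propto> (\<lambda>a. \<Sum>ab\<in>PiE (row_supp n HZ i - {j}) (\<lambda>_. UNIV :: f4 set).
            if xof a + (\<Sum>b\<in>row_supp n HZ i - {j}. xof (ab b)) = sX i
            then (\<Prod>b\<in>row_supp n HZ i - {j}. mZ l b i (ab b)) else 0)"
    \<comment> \<open>four-state BP, normalized beliefs\<close>
    and b4_def: "\<forall>l. \<forall>j<n.
        b4 l j \<propto> (\<lambda>a. Qphi Q j a
            * (\<Prod>i\<in>col_supp m HX j. mXh l i j a)
            * (\<Prod>i\<in>col_supp m HZ j. mZh l i j a))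
        \<and> (\<Sum>a\<in>UNIV. b4 l j a) = 1"
    \<comment> \<open>compatible initialization\<close>
    and init_X: "\<forall>j<n. \<forall>i\<in>col_supp m HX j.
        (\<lambda>(x, z). mXh 0 i j (phi x z)) \<propto> (\<lambda>(x, z). nuh 0 i j z)"
    and init_Z: "\<forall>j<n. \<forall>i\<in>col_supp m HZ j.
        (\<lambda>(x, z). mZh 0 i j (phi x z)) \<propto> (\<lambda>(x, z). muh 0 i j x)"
  shows
    \<comment> \<open>(1) posteriors agree\<close>
    "(\<forall>x\<in>vecs2 n. \<forall>z\<in>vecs2 n.
        P4 m n HX HZ sX sZ Q (phi_vec n x z) = P2 m n HX HZ sX sZ Q x z)
     \<comment> \<open>(2) check-to-variable messages agree\<close>
     \<and> (\<forall>l. \<forall>j<n.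
          (\<forall>i\<in>col_supp m HX j. (\<lambda>(x, z). mXh l i j (phi x z)) \<propto> (\<lambda>(x, z). nuh l i j z))
        \<and> (\<forall>i\<in>col_supp m HZ j. (\<lambda>(x, z). mZh l i j (phi x z)) \<propto> (\<lambda>(x, z). muh l i j x)))
     \<comment> \<open>(3) variable-to-check messages agree after marginalization\<close>
     \<and> (\<forall>l. \<forall>j<n.
          (\<forall>i\<in>col_supp m HX j. nu l j i \<propto> (\<lambda>z. \<Sum>x\<in>UNIV. mX l j i (phi x z)))
        \<and> (\<forall>i\<in>col_supp m HZ j. mu l j i \<propto> (\<lambda>x. \<Sum>z\<in>UNIV. mZ l j i (phi x z))))
     \<comment> \<open>(4) normalized beliefs agree\<close>
     \<and> (\<forall>l. \<forall>j<n. \<forall>\<xi> \<zeta>. b4 l j (phi \<xi> \<zeta>) = b2 l j \<xi> \<zeta>)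
     \<comment> \<open>(5) hard decisions agree for any tie-breaking order\<close>
     \<and> (\<forall>ord :: (bit \<times> bit) list. distinct ord \<and> set ord = UNIV \<longrightarrow>
          (\<forall>l. \<forall>j<n.
             argmax_ord (b4 l j) (map (\<lambda>(x, z). phi x z) ord)
             = (\<lambda>(x, z). phi x z) (argmax_ord (\<lambda>(x, z). b2 l j x z) ord)))"
proof -
  have P1: "\<forall>x\<in>vecs2 n. \<forall>z\<in>vecs2 n.
        P4 m n HX HZ sX sZ Q (phi_vec n x z) = P2 m n HX HZ sX sZ Q x z"
    by (simp add: P4_def P2_def Z_eq weight_eq)
  define C2 where "C2 l \<longleftrightarrow> (\<forall>j<n.
          (\<forall>i\<in>col_supp m HX j. (\<lambda>(x, z). mXh l i j (phi x z)) \<propto> (\<lambda>(x, z). nuh l i j z))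
        \<and> (\<forall>i\<in>col_supp m HZ j. (\<lambda>(x, z). mZh l i j (phi x z)) \<propto> (\<lambda>(x, z). muh l i j x)))" for l
  define C3 where "C3 l \<longleftrightarrow> (\<forall>j<n.
          (\<forall>i\<in>col_supp m HX j. nu l j i \<propto> (\<lambda>z. \<Sum>x\<in>UNIV. mX l j i (phi x z)))
        \<and> (\<forall>i\<in>col_supp m HZ j. mu l j i \<propto> (\<lambda>x. \<Sum>z\<in>UNIV. mZ l j i (phi x z))))" for l
  have cst: "\<exists>cX cZ. (\<forall>k\<in>col_supp m HX j. cX k > 0 \<and> (\<forall>x z. mXh l k j (phi x z) = cX k * nuh l k j z))
      \<and> (\<forall>k\<in>col_supp m HZ j. cZ k > 0 \<and> (\<forall>x z. mZh l k j (phi x z) = cZ k * muh l k j x))"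
    if "C2 l" "j < n" for l j
  proof -
    have "\<forall>k\<in>col_supp m HX j. \<exists>c>0. \<forall>x z. mXh l k j (phi x z) = c * nuh l k j z"
      using that by (auto simp: C2_def intro!: propto_pair)
    then obtain cX where cX: "\<forall>k\<in>col_supp m HX j. cX k > 0 \<and> (\<forall>x z. mXh l k j (phi x z) = cX k * nuh l k j z)"
      by metis
    have "\<forall>k\<in>col_supp m HZ j. \<exists>c>0. \<forall>x z. mZh l k j (phi x z) = c * muh l k j x"
      using that by (auto simp: C2_def intro!: propto_pair)
    then obtain cZ where cZ: "\<forall>k\<in>col_supp m HZ j. cZ k > 0 \<and> (\<forall>x z. mZh l k j (phi x z) = cZ k * muh l k j x)"
      by metis
    show ?thesis using cX cZ by blast
  qed
  have S3: "C3 l" if h2: "C2 l" for l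
    unfolding C3_def
  proof (intro allI impI conjI ballI)
    fix j assume j: "j < n"
    obtain cX cZ where cX: "\<forall>k\<in>col_supp m HX j. cX k > 0 \<and> (\<forall>x z. mXh l k j (phi x z) = cX k * nuh l k j z)"
      and cZ: "\<forall>k\<in>col_supp m HZ j. cZ k > 0 \<and> (\<forall>x z. mZh l k j (phi x z) = cZ k * muh l k j x)"
      using cst[OF h2 j] by blast
    {
      fix i assume i: "i \<in> col_supp m HX j"
      obtain c where c: "c > 0" "\<forall>a. mX l j i a = c * (Qphi Q j a
            * (\<Prod>k\<in>col_supp m HX j - {i}. mXh l k j a)
            * (\<Prod>k\<in>col_supp m HZ j. mZh l k j a))"
        using mX_upd j i unfolding propto_def by blast
      obtain d where d: "d > 0" "\<forall>z. nu l j i z = d * (\<Sum>x\<in>UNIV. Q j x z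
            * (\<Prod>k\<in>col_supp m HX j - {i}. nuh l k j z)
            * (\<Prod>k\<in>col_supp m HZ j. muh l k j x))"
        using nu_upd j i unfolding propto_def by blast
      define K where "K = c * (\<Prod>k\<in>col_supp m HX j - {i}. cX k) * (\<Prod>k\<in>col_supp m HZ j. cZ k)"
      have Kpos: "K > 0" unfolding K_def using c cX cZ by (intro mult_pos_pos prod_pos) auto
      have e: "mX l j i (phi x z) = K * (Q j x z
            * (\<Prod>k\<in>col_supp m HX j - {i}. nuh l k j z)
            * (\<Prod>k\<in>col_supp m HZ j. muh l k j x))" for x z
      proof -
        have p1: "(\<Prod>k\<in>col_supp m HX j - {i}. mXh l k j (phi x z)) =
            (\<Prod>k\<in>col_supp m HX j - {i}. cX k) * (\<Prod>k\<in>col_supp m HX j - {i}. nuh l k j z)"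
          by (rule prod_factor) (use cX in auto)
        have p2: "(\<Prod>k\<in>col_supp m HZ j. mZh l k j (phi x z)) =
            (\<Prod>k\<in>col_supp m HZ j. cZ k) * (\<Prod>k\<in>col_supp m HZ j. muh l k j x)"
          by (rule prod_factor) (use cZ in auto)
        show ?thesis using c(2)[rule_format, of "phi x z"] unfolding p1 p2 K_def Qphi_def by (simp add: ac_simps)
      qed
      show "nu l j i \<propto> (\<lambda>z. \<Sum>x\<in>UNIV. mX l j i (phi x z))"
        unfolding propto_def
      proof (intro exI[of _ "d / K"] conjI allI)
        show "d / K > 0" using d Kpos by simp
        fix z
        show "nu l j i z = d / K * (\<Sum>x\<in>UNIV. mX l j i (phi x z))"
          using d(2) Kpos unfolding e by (simp add: sum_distrib_left[symmetric])
      qed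
    }
    {
      fix i assume i: "i \<in> col_supp m HZ j"
      obtain c where c: "c > 0" "\<forall>a. mZ l j i a = c * (Qphi Q j a
            * (\<Prod>k\<in>col_supp m HX j. mXh l k j a)
            * (\<Prod>k\<in>col_supp m HZ j - {i}. mZh l k j a))"
        using mZ_upd j i unfolding propto_def by blast
      obtain d where d: "d > 0" "\<forall>x. mu l j i x = d * (\<Sum>z\<in>UNIV. Q j x z
            * (\<Prod>k\<in>col_supp m HX j. nuh l k j z)
            * (\<Prod>k\<in>col_supp m HZ j - {i}. muh l k j x))"
        using mu_upd j i unfolding propto_def by blast
      define K where "K = c * (\<Prod>k\<in>col_supp m HX j. cX k) * (\<Prod>k\<in>col_supp m HZ j - {i}. cZ k)"
      have Kpos: "K > 0" unfolding K_def using c cX cZ by (intro mult_pos_pos prod_pos) auto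
      have e: "mZ l j i (phi x z) = K * (Q j x z
            * (\<Prod>k\<in>col_supp m HX j. nuh l k j z)
            * (\<Prod>k\<in>col_supp m HZ j - {i}. muh l k j x))" for x z
      proof -
        have p1: "(\<Prod>k\<in>col_supp m HX j. mXh l k j (phi x z)) =
            (\<Prod>k\<in>col_supp m HX j. cX k) * (\<Prod>k\<in>col_supp m HX j. nuh l k j z)"
          by (rule prod_factor) (use cX in auto)
        have p2: "(\<Prod>k\<in>col_supp m HZ j - {i}. mZh l k j (phi x z)) =
            (\<Prod>k\<in>col_supp m HZ j - {i}. cZ k) * (\<Prod>k\<in>col_supp m HZ j - {i}. muh l k j x)"
          by (rule prod_factor) (use cZ in auto)
        show ?thesis using c(2)[rule_format, of "phi x z"] unfolding p1 p2 K_def Qphi_def by (simp add: ac_simps)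
      qed
      show "mu l j i \<propto> (\<lambda>x. \<Sum>z\<in>UNIV. mZ l j i (phi x z))"
        unfolding propto_def
      proof (intro exI[of _ "d / K"] conjI allI)
        show "d / K > 0" using d Kpos by simp
        fix x
        show "mu l j i x = d / K * (\<Sum>z\<in>UNIV. mZ l j i (phi x z))"
          using d(2) Kpos unfolding e by (simp add: sum_distrib_left[symmetric])
      qed
    }
  qed
  have S2: "C2 (Suc l)" if h3: "C3 l" for l
    unfolding C2_def
  proof (intro allI impI conjI ballI)
    fix j assume j: "j < n"
    {
      fix i assume i: "i \<in> col_supp m HX j"
      have im: "i < m" and ji: "j \<in> row_supp n HX i" using i j by (auto simp: col_supp_def row_supp_def)
      define S where "S = row_supp n HX i - {j}"
      have finS: "finite S" unfolding S_def using fin_row by auto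
      have "\<forall>b\<in>S. \<exists>cb>0. \<forall>w. nu l b i w = cb * (\<Sum>x\<in>UNIV. mX l b i (phi x w))"
      proof
        fix b assume b: "b \<in> S"
        then have "b < n" "i \<in> col_supp m HX b" using im by (auto simp: S_def row_supp_def col_supp_def)
        then show "\<exists>cb>0. \<forall>w. nu l b i w = cb * (\<Sum>x\<in>UNIV. mX l b i (phi x w))"
          using h3 unfolding C3_def propto_def by blast
      qed
      then obtain cb where cb: "\<forall>b\<in>S. cb b > 0 \<and> (\<forall>w. nu l b i w = cb b * (\<Sum>x\<in>UNIV. mX l b i (phi x w)))"
        by metis
      define K where "K = (\<Prod>b\<in>S. 1 / cb b)"
      have Kpos: "K > 0" unfolding K_def using cb by (intro prod_pos) auto
      have pr: "(\<Prod>b\<in>S. \<Sum>x\<in>UNIV. mX l b i (phi x (zb b))) = K * (\<Prod>b\<in>S. nu l b i (zb b))" for zb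
        unfolding K_def
      proof (rule prod_factor, intro ballI)
        fix b assume "b \<in> S"
        then have "cb b > 0" "nu l b i (zb b) = cb b * (\<Sum>x\<in>UNIV. mX l b i (phi x (zb b)))" using cb by auto
        then show "(\<Sum>x\<in>UNIV. mX l b i (phi x (zb b))) = 1 / cb b * nu l b i (zb b)" by simp
      qed
      obtain c where c: "c > 0" "\<forall>a. mXh (Suc l) i j a = c * (\<Sum>ab\<in>PiE S (\<lambda>_. UNIV :: f4 set).
            if zof a + (\<Sum>b\<in>S. zof (ab b)) = sZ i then (\<Prod>b\<in>S. mX l b i (ab b)) else 0)"
        using mXh_upd im ji unfolding propto_def S_def by blast
      obtain d where d: "d > 0" "\<forall>z. nuh (Suc l) i j z = d * (\<Sum>zb\<in>PiE S (\<lambda>_. UNIV :: bit set).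
            if z + (\<Sum>b\<in>S. zb b) = sZ i then (\<Prod>b\<in>S. nu l b i (zb b)) else 0)"
        using nuh_upd im ji unfolding propto_def S_def by blast
      show "(\<lambda>(x, z). mXh (Suc l) i j (phi x z)) \<propto> (\<lambda>(x, z). nuh (Suc l) i j z)"
      proof (rule propto_pairI[of "c * K / d"])
        show "c * K / d > 0" using c d Kpos by simp
        fix x z
        have "mXh (Suc l) i j (phi x z) = c * (\<Sum>zb\<in>PiE S (\<lambda>_. UNIV :: bit set).
            if zof (phi x z) + (\<Sum>b\<in>S. zb b) = sZ i
            then (\<Prod>b\<in>S. \<Sum>x'\<in>UNIV. mX l b i (phi x' (zb b))) else 0)"
          using c(2)[rule_format, of "phi x z"]
            sum_PiE_z[OF finS, of "\<lambda>t. zof (phi x z) + t = sZ i" "\<lambda>b. mX l b i"] by simp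
        also have "\<dots> = c * (\<Sum>zb\<in>PiE S (\<lambda>_. UNIV :: bit set).
            if z + (\<Sum>b\<in>S. zb b) = sZ i then K * (\<Prod>b\<in>S. nu l b i (zb b)) else 0)"
          by (intro arg_cong[where f = "\<lambda>t. c * t"] sum.cong refl) (simp add: pr)
        also have "\<dots> = c * K * (\<Sum>zb\<in>PiE S (\<lambda>_. UNIV :: bit set).
            if z + (\<Sum>b\<in>S. zb b) = sZ i then (\<Prod>b\<in>S. nu l b i (zb b)) else 0)"
          unfolding sum_distrib_left by (intro sum.cong refl) auto
        also have "\<dots> = c * K / d * nuh (Suc l) i j z" using d by simp
        finally show "mXh (Suc l) i j (phi x z) = c * K / d * nuh (Suc l) i j z" .
      qed
    }
    {
      fix i assume i: "i \<in> col_supp m HZ j"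
      have im: "i < m" and ji: "j \<in> row_supp n HZ i" using i j by (auto simp: col_supp_def row_supp_def)
      define S where "S = row_supp n HZ i - {j}"
      have finS: "finite S" unfolding S_def using fin_row by auto
      have "\<forall>b\<in>S. \<exists>cb>0. \<forall>w. mu l b i w = cb * (\<Sum>z\<in>UNIV. mZ l b i (phi w z))"
      proof
        fix b assume b: "b \<in> S"
        then have "b < n" "i \<in> col_supp m HZ b" using im by (auto simp: S_def row_supp_def col_supp_def)
        then show "\<exists>cb>0. \<forall>w. mu l b i w = cb * (\<Sum>z\<in>UNIV. mZ l b i (phi w z))"
          using h3 unfolding C3_def propto_def by blast
      qed
      then obtain cb where cb: "\<forall>b\<in>S. cb b > 0 \<and> (\<forall>w. mu l b i w = cb b * (\<Sum>z\<in>UNIV. mZ l b i (phi w z)))"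
        by metis
      define K where "K = (\<Prod>b\<in>S. 1 / cb b)"
      have Kpos: "K > 0" unfolding K_def using cb by (intro prod_pos) auto
      have pr: "(\<Prod>b\<in>S. \<Sum>z\<in>UNIV. mZ l b i (phi (xb b) z)) = K * (\<Prod>b\<in>S. mu l b i (xb b))" for xb
        unfolding K_def
      proof (rule prod_factor, intro ballI)
        fix b assume "b \<in> S"
        then have "cb b > 0" "mu l b i (xb b) = cb b * (\<Sum>z\<in>UNIV. mZ l b i (phi (xb b) z))" using cb by auto
        then show "(\<Sum>z\<in>UNIV. mZ l b i (phi (xb b) z)) = 1 / cb b * mu l b i (xb b)" by simp
      qed
      obtain c where c: "c > 0" "\<forall>a. mZh (Suc l) i j a = c * (\<Sum>ab\<in>PiE S (\<lambda>_. UNIV :: f4 set).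
            if xof a + (\<Sum>b\<in>S. xof (ab b)) = sX i then (\<Prod>b\<in>S. mZ l b i (ab b)) else 0)"
        using mZh_upd im ji unfolding propto_def S_def by blast
      obtain d where d: "d > 0" "\<forall>x. muh (Suc l) i j x = d * (\<Sum>xb\<in>PiE S (\<lambda>_. UNIV :: bit set).
            if x + (\<Sum>b\<in>S. xb b) = sX i then (\<Prod>b\<in>S. mu l b i (xb b)) else 0)"
        using muh_upd im ji unfolding propto_def S_def by blast
      show "(\<lambda>(x, z). mZh (Suc l) i j (phi x z)) \<propto> (\<lambda>(x, z). muh (Suc l) i j x)"
      proof (rule propto_pairI[of "c * K / d"])
        show "c * K / d > 0" using c d Kpos by simp
        fix x z
        have "mZh (Suc l) i j (phi x z) = c * (\<Sum>xb\<in>PiE S (\<lambda>_. UNIV :: bit set).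
            if xof (phi x z) + (\<Sum>b\<in>S. xb b) = sX i
            then (\<Prod>b\<in>S. \<Sum>z'\<in>UNIV. mZ l b i (phi (xb b) z')) else 0)"
          using c(2)[rule_format, of "phi x z"]
            sum_PiE_x[OF finS, of "\<lambda>t. xof (phi x z) + t = sX i" "\<lambda>b. mZ l b i"] by simp
        also have "\<dots> = c * (\<Sum>xb\<in>PiE S (\<lambda>_. UNIV :: bit set).
            if x + (\<Sum>b\<in>S. xb b) = sX i then K * (\<Prod>b\<in>S. mu l b i (xb b)) else 0)"
          by (intro arg_cong[where f = "\<lambda>t. c * t"] sum.cong refl) (simp add: pr)
        also have "\<dots> = c * K * (\<Sum>xb\<in>PiE S (\<lambda>_. UNIV :: bit set).
            if x + (\<Sum>b\<in>S. xb b) = sX i then (\<Prod>b\<in>S. mu l b i (xb b)) else 0)"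
          unfolding sum_distrib_left by (intro sum.cong refl) auto
        also have "\<dots> = c * K / d * muh (Suc l) i j x" using d by simp
        finally show "mZh (Suc l) i j (phi x z) = c * K / d * muh (Suc l) i j x" .
      qed
    }
  qed
  have all2: "C2 l" for l
  proof (induction l)
    case 0 then show ?case using init_X init_Z by (simp add: C2_def)
  next
    case (Suc l) then show ?case using S2 S3 by blast
  qed
  have all3: "C3 l" for l using S3 all2 by blast
  have P4: "\<forall>l. \<forall>j<n. \<forall>\<xi> \<zeta>. b4 l j (phi \<xi> \<zeta>) = b2 l j \<xi> \<zeta>"
  proof (intro allI impI)
    fix l j \<xi> \<zeta> assume j: "j < n"
    obtain cX cZ where cX: "\<forall>k\<in>col_supp m HX j. cX k > 0 \<and> (\<forall>x z. mXh l k j (phi x z) = cX k * nuh l k j z)"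
      and cZ: "\<forall>k\<in>col_supp m HZ j. cZ k > 0 \<and> (\<forall>x z. mZh l k j (phi x z) = cZ k * muh l k j x)"
      using cst[OF all2 j] by blast
    obtain c where c: "c > 0" "\<forall>a. b4 l j a = c * (Qphi Q j a
            * (\<Prod>i\<in>col_supp m HX j. mXh l i j a)
            * (\<Prod>i\<in>col_supp m HZ j. mZh l i j a))"
      and s4: "(\<Sum>a\<in>UNIV. b4 l j a) = 1"
      using b4_def j unfolding propto_def by blast
    obtain d where d: "d > 0" "\<forall>p. (\<lambda>(x, z). b2 l j x z) p = d * (\<lambda>(x, z). Q j x z
            * (\<Prod>i\<in>col_supp m HX j. nuh l i j z)
            * (\<Prod>i\<in>col_supp m HZ j. muh l i j x)) p"
      and s2: "(\<Sum>x\<in>UNIV. \<Sum>z\<in>UNIV. b2 l j x z) = 1"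
      using b2_def j unfolding propto_def by blast
    define K where "K = c * (\<Prod>k\<in>col_supp m HX j. cX k) * (\<Prod>k\<in>col_supp m HZ j. cZ k) / d"
    have Kpos: "K > 0" unfolding K_def using c d cX cZ by (intro divide_pos_pos mult_pos_pos prod_pos) auto
    have e: "b4 l j (phi x z) = K * b2 l j x z" for x z
    proof -
      have p1: "(\<Prod>k\<in>col_supp m HX j. mXh l k j (phi x z)) =
          (\<Prod>k\<in>col_supp m HX j. cX k) * (\<Prod>k\<in>col_supp m HX j. nuh l k j z)"
        by (rule prod_factor) (use cX in auto)
      have p2: "(\<Prod>k\<in>col_supp m HZ j. mZh l k j (phi x z)) =
          (\<Prod>k\<in>col_supp m HZ j. cZ k) * (\<Prod>k\<in>col_supp m HZ j. muh l k j x)"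
        by (rule prod_factor) (use cZ in auto)
      have b2e: "b2 l j x z = d * (Q j x z * (\<Prod>i\<in>col_supp m HX j. nuh l i j z)
            * (\<Prod>i\<in>col_supp m HZ j. muh l i j x))"
        using d(2)[rule_format, of "(x, z)"] by simp
      show ?thesis using c(2)[rule_format, of "phi x z"] d(1) unfolding p1 p2 K_def Qphi_def b2e
        by (simp add: field_simps)
    qed
    have "1 = (\<Sum>x\<in>UNIV. \<Sum>z\<in>UNIV. b4 l j (phi x z))" using s4 by (simp only: sum_f4)
    also have "\<dots> = K * (\<Sum>x\<in>UNIV. \<Sum>z\<in>UNIV. b2 l j x z)" by (simp add: e sum_distrib_left)
    also have "\<dots> = K" using s2 by simp
    finally show "b4 l j (phi \<xi> \<zeta>) = b2 l j \<xi> \<zeta>" using e by simp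
  qed
  have P5: "\<forall>ord :: (bit \<times> bit) list. distinct ord \<and> set ord = UNIV \<longrightarrow>
          (\<forall>l. \<forall>j<n.
             argmax_ord (b4 l j) (map (\<lambda>(x, z). phi x z) ord)
             = (\<lambda>(x, z). phi x z) (argmax_ord (\<lambda>(x, z). b2 l j x z) ord))"
  proof (intro allI impI)
    fix ord :: "(bit \<times> bit) list" and l j
    assume o: "distinct ord \<and> set ord = UNIV" and j: "j < n"
    show "argmax_ord (b4 l j) (map (\<lambda>(x, z). phi x z) ord)
             = (\<lambda>(x, z). phi x z) (argmax_ord (\<lambda>(x, z). b2 l j x z) ord)"
      by (rule argmax_map) (use o j P4 in auto)
  qed
  show ?thesis using P1 all2 all3 P4 P5 unfolding C2_def C3_def by blast
qed

end
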